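(* Let $G=(V,w,m)$ be a locally finite measured weighted graph (as defined in the context). Suppose that (i) $\operatorname{Deg}_{\max} := \sup_{x\in V}\sum_{y\in V} q(x,y) < \infty$, (ii) $q_{\min} := \inf_{x\sim y} q(x,y) > 0$, (iii) $\kappa(x,y)\ge 0$ for all $x\neq y\in V$. Then every bounded harmonic function $f:V\to\mathbb{R}$ (i.e. bounded $f$ with $\Delta f=0$) is constant.
   Context: A measured weighted graph $G=(V,w,m)$ consists of a countable set $V$, a symmetric function $w:V\times V\to[0,\infty)$ vanishing on the diagonal, and $m:V\to(0,\infty)$. Write $x\sim y$ iff $w(x,y)>0$. Local finiteness means $|\{y: w(x,y)>0\}|<\infty$ for every $x$. Set $q(x,y):=w(x,y)/m(x)$ and $\Delta f(x):=\sum_y q(x,y)(f(y)-f(x))$ for $f\in\mathbb{R}^V$. The combinatorial distance is $d(x,y):=\inf\{n: x=x_0\sim x_1\sim\cdots\sim x_n=y\}$. For $x\neq y$ put $\nabla_{xy}f:=\frac{f(x)-f(y)}{d(x,y)}$ and $\|\nabla f\|_\infty:=\sup_{x\sim y}\nabla_{xy}f$. The (Lin–Lu–Yau type, generalized) Ollivier curvature of $x\neq y$ is $$\kappa(x,y):=\inf\{\nabla_{xy}\Delta f:\ f\in\mathbb{R}^V,\ \nabla_{yx}f=1,\ \|\nabla f\|_\infty=1\}.$$ *)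

theory Defs
  imports "HOL-Analysis.Analysis"
begin

definition mw_graph :: "'a set \<Rightarrow> ('a \<Rightarrow> 'a \<Rightarrow> real) \<Rightarrow> ('a \<Rightarrow> real) \<Rightarrow> bool" where
  "mw_graph V w m \<longleftrightarrow> countable V
     \<and> (\<forall>x\<in>V. \<forall>y\<in>V. w x y \<ge> 0 \<and> w x y = w y x)
     \<and> (\<forall>x\<in>V. w x x = 0)
     \<and> (\<forall>x\<in>V. m x > 0)"

definition adj :: "'a set \<Rightarrow> ('a \<Rightarrow> 'a \<Rightarrow> real) \<Rightarrow> 'a \<Rightarrow> 'a \<Rightarrow> bool" where
  "adj V w x y \<longleftrightarrow> x \<in> V \<and> y \<in> V \<and> w x y > 0"

definition nbrs :: "'a set \<Rightarrow> ('a \<Rightarrow> 'a \<Rightarrow> real) \<Rightarrow> 'a \<Rightarrow> 'a set" where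
  "nbrs V w x = {y. adj V w x y}"

definition locally_finite :: "'a set \<Rightarrow> ('a \<Rightarrow> 'a \<Rightarrow> real) \<Rightarrow> bool" where
  "locally_finite V w \<longleftrightarrow> (\<forall>x\<in>V. finite (nbrs V w x))"

definition qq :: "('a \<Rightarrow> 'a \<Rightarrow> real) \<Rightarrow> ('a \<Rightarrow> real) \<Rightarrow> 'a \<Rightarrow> 'a \<Rightarrow> real" where
  "qq w m x y = w x y / m x"

text \<open>Laplacian; the sum only runs over neighbours (the other terms vanish).\<close>
definition lap :: "'a set \<Rightarrow> ('a \<Rightarrow> 'a \<Rightarrow> real) \<Rightarrow> ('a \<Rightarrow> real) \<Rightarrow> ('a \<Rightarrow> real) \<Rightarrow> 'a \<Rightarrow> real" where
  "lap V w m f x = (\<Sum>y\<in>nbrs V w x. qq w m x y * (f y - f x))"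

definition deg :: "'a set \<Rightarrow> ('a \<Rightarrow> 'a \<Rightarrow> real) \<Rightarrow> ('a \<Rightarrow> real) \<Rightarrow> 'a \<Rightarrow> real" where
  "deg V w m x = (\<Sum>y\<in>nbrs V w x. qq w m x y)"

definition walk :: "'a set \<Rightarrow> ('a \<Rightarrow> 'a \<Rightarrow> real) \<Rightarrow> nat \<Rightarrow> 'a \<Rightarrow> 'a \<Rightarrow> bool" where
  "walk V w n x y \<longleftrightarrow> (\<exists>p. p 0 = x \<and> p n = y \<and> x \<in> V \<and> (\<forall>i<n. adj V w (p i) (p (Suc i))))"

definition connected_graph :: "'a set \<Rightarrow> ('a \<Rightarrow> 'a \<Rightarrow> real) \<Rightarrow> bool" where
  "connected_graph V w \<longleftrightarrow> (\<forall>x\<in>V. \<forall>y\<in>V. \<exists>n. walk V w n x y)"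

text \<open>Combinatorial distance (meaningful for connected graphs).\<close>
definition gdist :: "'a set \<Rightarrow> ('a \<Rightarrow> 'a \<Rightarrow> real) \<Rightarrow> 'a \<Rightarrow> 'a \<Rightarrow> nat" where
  "gdist V w x y = Inf {n. walk V w n x y}"

definition grad :: "'a set \<Rightarrow> ('a \<Rightarrow> 'a \<Rightarrow> real) \<Rightarrow> ('a \<Rightarrow> real) \<Rightarrow> 'a \<Rightarrow> 'a \<Rightarrow> real" where
  "grad V w f x y = (f x - f y) / real (gdist V w x y)"

definition grad_norm :: "'a set \<Rightarrow> ('a \<Rightarrow> 'a \<Rightarrow> real) \<Rightarrow> ('a \<Rightarrow> real) \<Rightarrow> ereal" where
  "grad_norm V w f = (SUP (x, y) \<in> {(x, y). adj V w x y}. ereal (grad V w f x y))"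

definition curv :: "'a set \<Rightarrow> ('a \<Rightarrow> 'a \<Rightarrow> real) \<Rightarrow> ('a \<Rightarrow> real) \<Rightarrow> 'a \<Rightarrow> 'a \<Rightarrow> ereal" where
  "curv V w m x y = (INF f \<in> {f. grad V w f y x = 1 \<and> grad_norm V w f = 1}.
                       ereal (grad V w (lap V w m f) x y))"

end

theory Submission
  imports Defs
begin

lemma adj_sym: "mw_graph V w m \<Longrightarrow> adj V w a b \<Longrightarrow> adj V w b a"
  unfolding mw_graph_def adj_def by auto

lemma adj_neq: "mw_graph V w m \<Longrightarrow> adj V w a b \<Longrightarrow> a \<noteq> b"
  unfolding mw_graph_def adj_def by auto

lemma qq_pos: "mw_graph V w m \<Longrightarrow> adj V w a b \<Longrightarrow> qq w m a b > 0"
  unfolding mw_graph_def adj_def qq_def by auto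

lemma qq_nonneg: "mw_graph V w m \<Longrightarrow> b \<in> nbrs V w a \<Longrightarrow> qq w m a b \<ge> 0"
  using qq_pos[of V w m a b] unfolding nbrs_def by auto

lemma gdist_adj:
  assumes "mw_graph V w m" "adj V w a b"
  shows "gdist V w a b = 1"
proof -
  have ne: "a \<noteq> b" using adj_neq[OF assms] .
  have aV: "a \<in> V" using assms(2) unfolding adj_def by simp
  have w1: "walk V w 1 a b"
    unfolding walk_def
  proof (intro exI[of _ "\<lambda>i. if i = 0 then a else b"] conjI allI impI)
    fix i :: nat assume "i < 1"
    then have "i = 0" by simp
    then show "adj V w ((\<lambda>i. if i = 0 then a else b) i) ((\<lambda>i. if i = 0 then a else b) (Suc i))"
      using assms(2) by simp
  qed (use aV in simp_all)
  have w0: "\<not> walk V w 0 a b"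
  proof
    assume "walk V w 0 a b"
    then have "a = b" unfolding walk_def by auto
    then show False using ne by simp
  qed
  have "(LEAST n. walk V w n a b) = 1"
  proof (rule Least_equality)
    show "walk V w 1 a b" by (rule w1)
    fix n assume "walk V w n a b"
    then have "n \<noteq> 0" using w0 by metis
    then show "1 \<le> n" by simp
  qed
  then show ?thesis unfolding gdist_def Inf_nat_def by simp
qed

lemma lap_eq_on: "(\<And>v. v \<in> nbrs V w x \<Longrightarrow> f v = g v) \<Longrightarrow> f x = g x \<Longrightarrow> lap V w m f x = lap V w m g x"
  unfolding lap_def by (intro sum.cong) auto

definition hfun :: "'a set \<Rightarrow> ('a \<Rightarrow> 'a \<Rightarrow> real) \<Rightarrow> 'a \<Rightarrow> 'a \<Rightarrow> real" where
  "hfun V w x v = (if v = x then 0 else if adj V w x v then 1 else 2)"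

definition psi :: "'a set \<Rightarrow> ('a \<Rightarrow> 'a \<Rightarrow> real) \<Rightarrow> ('a \<Rightarrow> real) \<Rightarrow> 'a \<Rightarrow> real \<Rightarrow> 'a \<Rightarrow> real" where
  "psi V w g x e v = min (g v) (g x - e + hfun V w x v)"

definition phi :: "'a set \<Rightarrow> ('a \<Rightarrow> 'a \<Rightarrow> real) \<Rightarrow> ('a \<Rightarrow> real) \<Rightarrow> 'a \<Rightarrow> real \<Rightarrow> 'a \<Rightarrow> real \<Rightarrow> 'a \<Rightarrow> real" where
  "phi V w g x e z t v = psi V w g x e v - (if v = z then t else 0)"

lemma hfun_lip:
  assumes "mw_graph V w m" "adj V w a b"
  shows "hfun V w x a - hfun V w x b \<le> 1"
  using assms adj_sym[OF assms(1)] unfolding hfun_def by auto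

lemma psi_lip:
  assumes "mw_graph V w m" "adj V w a b" "g a - g b \<le> 1"
  shows "psi V w g x e a - psi V w g x e b \<le> 1"
  using hfun_lip[OF assms(1,2), of x] assms(3) unfolding psi_def by linarith

lemma local_ineq:
  assumes graph: "mw_graph V w m" and lf: "locally_finite V w"
    and cv: "curv V w m x y \<ge> 0" and xy: "adj V w x y"
    and lip: "\<forall>a b. adj V w a b \<longrightarrow> g a - g b \<le> 1"
    and hx: "lap V w m g x = 0" and hy: "lap V w m g y = 0"
    and z: "z \<in> nbrs V w x" "z \<noteq> y" "z \<notin> nbrs V w y"
    and t: "t \<ge> 0" and eta: "e = 1 - (g y - g x)"
    and H: "\<forall>u\<in>nbrs V w z. psi V w g x e u - psi V w g x e z + t \<le> 1"
  shows "t * qq w m x z \<le> e * (deg V w m x + deg V w m y)"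
proof -
  define ps where "ps = psi V w g x e"
  define ph where "ph = phi V w g x e z t"
  have yx: "adj V w y x" using adj_sym[OF graph xy] .
  have xV: "x \<in> V" and yV: "y \<in> V" using xy unfolding adj_def by auto
  have eta0: "e \<ge> 0" using lip yx eta by auto
  have gd1: "gdist V w y x = 1" using gdist_adj[OF graph yx] .
  have gd2: "gdist V w x y = 1" using gdist_adj[OF graph xy] .
  have xny: "x \<noteq> y" using adj_neq[OF graph xy] .
  have zx: "z \<noteq> x" using z(1) adj_neq[OF graph] unfolding nbrs_def by blast
  have psx: "ps x = g x - e" using eta0 unfolding ps_def psi_def hfun_def by auto
  have psy: "ps y = g y" using xny xy eta unfolding ps_def psi_def hfun_def by auto
  have phx: "ph x = g x - e" using psx zx unfolding ph_def phi_def ps_def by auto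
  have phy: "ph y = g y" using psy z(2) unfolding ph_def phi_def ps_def by auto
  have lipph: "ph a - ph b \<le> 1" if ab: "adj V w a b" for a b
  proof -
    have l1: "ps a - ps b \<le> 1" unfolding ps_def using psi_lip[OF graph ab] lip ab by blast
    show ?thesis
    proof (cases "b = z")
      case True
      then have "a \<in> nbrs V w z" using adj_sym[OF graph ab] unfolding nbrs_def by auto
      then have "ps a - ps z + t \<le> 1" using H unfolding ps_def by blast
      moreover have "a \<noteq> z" using True adj_neq[OF graph ab] by auto
      ultimately show ?thesis using True unfolding ph_def phi_def ps_def by auto
    next
      case False
      then show ?thesis using l1 t unfolding ph_def phi_def ps_def by auto
    qed
  qed
  have gn: "grad_norm V w ph = 1"
    unfolding grad_norm_def
  proof (rule antisym)
    show "(SUP (a, b)\<in>{(a, b). adj V w a b}. ereal (grad V w ph a b)) \<le> 1"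
      by (rule SUP_least) (auto simp: grad_def gdist_adj[OF graph] lipph)
    have "ereal (grad V w ph y x) \<le> (SUP (a, b)\<in>{(a, b). adj V w a b}. ereal (grad V w ph a b))"
      using yx by (intro SUP_upper2[of "(y,x)"]) auto
    moreover have "grad V w ph y x = 1" unfolding grad_def gd1 using phx phy eta by simp
    ultimately show "1 \<le> (SUP (a, b)\<in>{(a, b). adj V w a b}. ereal (grad V w ph a b))" by (simp add: one_ereal_def)
  qed
  have g1: "grad V w ph y x = 1" unfolding grad_def gd1 using phx phy eta by simp
  have "curv V w m x y \<le> ereal (grad V w (lap V w m ph) x y)"
    unfolding curv_def using gn g1 by (intro INF_lower) auto
  with cv have "0 \<le> ereal (grad V w (lap V w m ph) x y)" by (rule order_trans)
  then have main: "lap V w m ph x - lap V w m ph y \<ge> 0"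
    unfolding grad_def gd2 by simp
  have finx: "finite (nbrs V w x)" and finy: "finite (nbrs V w y)"
    using lf xV yV unfolding locally_finite_def by auto
  have lx: "lap V w m ph x \<le> e * deg V w m x - t * qq w m x z"
  proof -
    have s1: "lap V w m ph x = (\<Sum>v\<in>nbrs V w x. qq w m x v * (ps v - ps x) - qq w m x v * (if v = z then t else 0))"
      unfolding lap_def
    proof (rule sum.cong)
      fix v assume "v \<in> nbrs V w x"
      have "ph v - ph x = (ps v - ps x) - (if v = z then t else 0)"
        using zx unfolding ph_def phi_def ps_def by simp
      then show "qq w m x v * (ph v - ph x) = qq w m x v * (ps v - ps x) - qq w m x v * (if v = z then t else 0)"
        by (simp only: right_diff_distrib)
    qed simp
    have s2: "(\<Sum>v\<in>nbrs V w x. qq w m x v * (ps v - ps x) - qq w m x v * (if v = z then t else 0)) = (\<Sum>v\<in>nbrs V w x. qq w m x v * (ps v - ps x)) - (\<Sum>v\<in>nbrs V w x. qq w m x v * (if v = z then t else 0))"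
      by (rule sum_subtractf)
    have s3: "(\<Sum>v\<in>nbrs V w x. qq w m x v * (if v = z then t else 0)) = (\<Sum>v\<in>nbrs V w x. (if v = z then qq w m x z * t else 0))"
      by (intro sum.cong) auto
    have s4: "(\<Sum>v\<in>nbrs V w x. (if v = z then qq w m x z * t else 0)) = qq w m x z * t"
      using finx z(1) by simp
    have s5: "(\<Sum>v\<in>nbrs V w x. qq w m x v * (ps v - ps x)) \<le> (\<Sum>v\<in>nbrs V w x. qq w m x v * (g v - g x) + e * qq w m x v)"
    proof (rule sum_mono)
      fix v assume v: "v \<in> nbrs V w x"
      have "ps v - ps x \<le> g v - g x + e" using psx unfolding ps_def psi_def by auto
      then have "qq w m x v * (ps v - ps x) \<le> qq w m x v * (g v - g x + e)"
        using qq_nonneg[OF graph v] by (rule mult_left_mono)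
      then show "qq w m x v * (ps v - ps x) \<le> qq w m x v * (g v - g x) + e * qq w m x v"
        by (simp add: algebra_simps)
    qed
    have s6: "(\<Sum>v\<in>nbrs V w x. qq w m x v * (g v - g x) + e * qq w m x v) = (\<Sum>v\<in>nbrs V w x. qq w m x v * (g v - g x)) + e * (\<Sum>v\<in>nbrs V w x. qq w m x v)"
      by (simp only: sum.distrib sum_distrib_left)
    have s7: "(\<Sum>v\<in>nbrs V w x. qq w m x v * (g v - g x)) = 0" using hx unfolding lap_def .
    show ?thesis using s1 s2 s3 s4 s5 s6 s7 unfolding deg_def by (simp add: algebra_simps)
  qed
  have ly: "lap V w m ph y \<ge> - e * deg V w m y"
  proof -
    have "lap V w m ph y = (\<Sum>v\<in>nbrs V w y. qq w m y v * (ps v - g y))"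
      unfolding lap_def using phy z(3) by (intro sum.cong) (auto simp: ph_def phi_def ps_def)
    also have "\<dots> \<ge> (\<Sum>v\<in>nbrs V w y. qq w m y v * (g v - g y) - e * qq w m y v)"
    proof (rule sum_mono)
      fix v assume v: "v \<in> nbrs V w y"
      have yv: "adj V w y v" using v unfolding nbrs_def by auto
      have "g v - g y \<le> 1" using lip adj_sym[OF graph yv] by blast
      have "g x - e + hfun V w x v \<ge> g v - e"
      proof (cases "v = x")
        case True then show ?thesis unfolding hfun_def by simp
      next
        case False
        show ?thesis
        proof (cases "adj V w x v")
          case True
          have a1: "g v - g x \<le> 1" using lip adj_sym[OF graph True] by blast
          have a2: "hfun V w x v = 1" using False True unfolding hfun_def by simp
          show ?thesis using a1 a2 by linarith
        next
          case False2: False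
          have a2: "hfun V w x v = 2" using False False2 unfolding hfun_def by simp
          show ?thesis using a2 \<open>g v - g y \<le> 1\<close> eta eta0 by linarith
        qed
      qed
      then have "ps v \<ge> g v - e" unfolding ps_def psi_def using eta0 by auto
      then have "qq w m y v * (g v - e - g y) \<le> qq w m y v * (ps v - g y)"
        using qq_nonneg[OF graph v] by (intro mult_left_mono) auto
      then show "qq w m y v * (g v - g y) - e * qq w m y v \<le> qq w m y v * (ps v - g y)"
        by (simp add: algebra_simps)
    qed
    finally have r1: "(\<Sum>v\<in>nbrs V w y. qq w m y v * (g v - g y) - e * qq w m y v) \<le> lap V w m ph y" .
    have r2: "(\<Sum>v\<in>nbrs V w y. qq w m y v * (g v - g y) - e * qq w m y v) = (\<Sum>v\<in>nbrs V w y. qq w m y v * (g v - g y)) - e * (\<Sum>v\<in>nbrs V w y. qq w m y v)"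
      by (simp only: sum_subtractf sum_distrib_left)
    have r3: "(\<Sum>v\<in>nbrs V w y. qq w m y v * (g v - g y)) = 0" using hy unfolding lap_def .
    show ?thesis using r1 r2 r3 unfolding deg_def by simp
  qed
  have "e * (deg V w m x + deg V w m y) = e * deg V w m x + e * deg V w m y" by (simp only: distrib_left)
  moreover have "- e * deg V w m y = - (e * deg V w m y)" by simp
  ultimately show ?thesis using main lx ly by linarith
qed


theorem theorem2p1:
  fixes V :: "'a set" and w :: "'a \<Rightarrow> 'a \<Rightarrow> real" and m :: "'a \<Rightarrow> real" and f :: "'a \<Rightarrow> real"
  assumes graph: "mw_graph V w m"
    and conn: "connected_graph V w"
    and lf: "locally_finite V w"
    and degmax: "(SUP x \<in> V. ereal (deg V w m x)) < \<infinity>"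
    and qmin: "(INF (x, y) \<in> {(x, y). adj V w x y}. ereal (qq w m x y)) > 0"
    and curv_nonneg: "\<forall>x\<in>V. \<forall>y\<in>V. x \<noteq> y \<longrightarrow> curv V w m x y \<ge> 0"
    and bounded: "\<exists>B. \<forall>x\<in>V. \<bar>f x\<bar> \<le> B"
    and harmonic: "\<forall>x\<in>V. lap V w m f x = 0"
  shows "\<exists>c. \<forall>x\<in>V. f x = c"
proof -
  obtain B where B: "\<forall>x\<in>V. \<bar>f x\<bar> \<le> B" using bounded by blast
  show ?thesis
  proof (cases "\<forall>a b. adj V w a b \<longrightarrow> f a = f b")
    case True
    show ?thesis
    proof (cases "V = {}")
      case True then show ?thesis by auto
    next
      case False
      then obtain x0 where x0: "x0 \<in> V" by blast
      have "f x = f x0" if xV: "x \<in> V" for x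
      proof -
        obtain n where "walk V w n x0 x" using conn x0 xV unfolding connected_graph_def by blast
        then obtain p :: "nat \<Rightarrow> 'a" where p: "p 0 = x0" "p n = x" "\<forall>i<n. adj V w (p i) (p (Suc i))"
          unfolding walk_def by blast
        have "f (p i) = f x0" if "i \<le> n" for i
          using that
        proof (induction i)
          case 0 then show ?case using p by simp
        next
          case (Suc i)
          then have "i < n" by simp
          then have "adj V w (p i) (p (Suc i))" using p(3) by blast
          then have "f (p i) = f (p (Suc i))" using True by blast
          then show ?case using Suc by simp
        qed
        then show ?thesis using p by auto
      qed
      then show ?thesis by blast
    qed
  next
    case False
    then obtain a0 b0 where ab0: "adj V w a0 b0" "f a0 \<noteq> f b0" by blast
    define S where "S = {f a - f b | a b. adj V w a b}"
    have Sne: "S \<noteq> {}" using ab0 unfolding S_def by blast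
    have Sbd: "s \<le> 2 * B" if "s \<in> S" for s
    proof -
      obtain a b where ab: "s = f a - f b" "adj V w a b" using \<open>s \<in> S\<close> unfolding S_def by blast
      then have "a \<in> V" "b \<in> V" unfolding adj_def by auto
      then have "\<bar>f a\<bar> \<le> B" "\<bar>f b\<bar> \<le> B" using B by auto
      then show ?thesis using ab by linarith
    qed
    have bdd: "bdd_above S" using Sbd by (intro bdd_aboveI) blast
    define L where "L = Sup S"
    have Lup: "f a - f b \<le> L" if "adj V w a b" for a b
      unfolding L_def using bdd that by (intro cSup_upper) (auto simp: S_def)
    have Lpos: "L > 0"
    proof (cases "f a0 > f b0")
      case True then show ?thesis using Lup[OF ab0(1)] by linarith
    next
      case False
      then have "f b0 > f a0" using ab0(2) by linarith
      then show ?thesis using Lup[OF adj_sym[OF graph ab0(1)]] by linarith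
    qed
    have Lapprox: "\<exists>a b. adj V w a b \<and> f a - f b > L - r" if "r > 0" for r
    proof -
      have "L - r < Sup S" using that unfolding L_def by simp
      then obtain s where "s \<in> S" "L - r < s" using less_cSup_iff[OF Sne bdd] by blast
      then show ?thesis unfolding S_def by blast
    qed
    define g where "g = (\<lambda>v. f v / L)"
    have gdiff: "g a - g b = (f a - f b) / L" for a b unfolding g_def by (simp add: diff_divide_distrib)
    have lipg: "\<forall>a b. adj V w a b \<longrightarrow> g a - g b \<le> 1"
    proof (intro allI impI)
      fix a b assume "adj V w a b"
      then have "f a - f b \<le> L" by (rule Lup)
      then show "g a - g b \<le> 1" unfolding gdiff using Lpos by simp
    qed
    have gapprox: "\<exists>a b. adj V w a b \<and> g a - g b > 1 - r" if rpos: "r > 0" for r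
    proof -
      obtain a b where ab: "adj V w a b" "f a - f b > L - r * L" using Lapprox[of "r * L"] rpos Lpos by auto
      have "(L - r * L) / L < (f a - f b) / L" using ab(2) Lpos by (intro divide_strict_right_mono) auto
      moreover have "(L - r * L) / L = 1 - r" using Lpos by (simp add: field_simps)
      ultimately show ?thesis using ab(1) unfolding gdiff[symmetric] by auto
    qed
    have harm: "lap V w m g v = 0" if "v \<in> V" for v
    proof -
      have "lap V w m g v = (\<Sum>y\<in>nbrs V w v. qq w m v y * (f y - f v) / L)"
        unfolding lap_def gdiff by (intro sum.cong) auto
      also have "\<dots> = lap V w m f v / L" unfolding lap_def by (simp add: sum_divide_distrib)
      finally show ?thesis using harmonic that by simp
    qed
    have gB: "\<bar>g v\<bar> \<le> B / L" if "v \<in> V" for v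
      using B that Lpos unfolding g_def by (simp add: abs_div divide_right_mono)
    obtain r where r: "(SUP x \<in> V. ereal (deg V w m x)) \<le> ereal r"
    proof (cases "(SUP x \<in> V. ereal (deg V w m x))")
      case (real r0) then show ?thesis using that[of r0] by simp
    next
      case PInf then show ?thesis using degmax by simp
    next
      case MInf then show ?thesis using that[of 0] by simp
    qed
    define D where "D = max 1 r"
    have D1: "D \<ge> 1" unfolding D_def by simp
    have Ddeg: "deg V w m x \<le> D" if "x \<in> V" for x
    proof -
      have "ereal (deg V w m x) \<le> (SUP x \<in> V. ereal (deg V w m x))" using that by (rule SUP_upper)
      then have "ereal (deg V w m x) \<le> ereal r" using r by (rule order_trans)
      then show ?thesis unfolding D_def by simp
    qed
    obtain Q where Q: "0 < ereal Q" "ereal Q < (INF (x, y) \<in> {(x, y). adj V w x y}. ereal (qq w m x y))"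
      using ereal_dense2[OF qmin] by blast
    have Qpos: "Q > 0" using Q(1) by simp
    have Qle: "Q \<le> qq w m a b" if "adj V w a b" for a b
    proof -
      have "(INF (x, y) \<in> {(x, y). adj V w x y}. ereal (qq w m x y)) \<le> ereal (qq w m a b)"
        using that by (intro INF_lower2[of "(a, b)"]) auto
      then have "ereal Q < ereal (qq w m a b)" by (rule order.strict_trans2[OF Q(2)])
      then show ?thesis by simp
    qed
    have degnn: "deg V w m x \<ge> 0" for x
      unfolding deg_def by (intro sum_nonneg) (rule qq_nonneg[OF graph])
    define c where "c = Q / (2 * D)"
    define c0 where "c0 = min c (1/2)"
    define K where "K = 2 * D / Q + 1"
    have cpos: "c > 0" unfolding c_def using Qpos D1 by simp
    have c0pos: "c0 > 0" unfolding c0_def using cpos by simp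
    have K1: "K \<ge> 1" unfolding K_def using Qpos D1 by simp
    have step: "\<exists>x' y'. adj V w x' y' \<and> g y' - g x' > 1 - K * e \<and> g x' \<le> g x - c"
      if xy: "adj V w x y" and e0: "0 < e" and ec: "e < c0" and gxy: "g y - g x > 1 - e" for x y e
    proof -
      have xV: "x \<in> V" and yV: "y \<in> V" using xy unfolding adj_def by auto
      have xny: "x \<noteq> y" using adj_neq[OF graph xy] .
      define eta where "eta = 1 - (g y - g x)"
      have "g y - g x \<le> 1" using lipg adj_sym[OF graph xy] by blast
      then have eta0: "eta \<ge> 0" unfolding eta_def by simp
      have etae: "eta < e" using gxy unfolding eta_def by simp
      have finx: "finite (nbrs V w x)" using lf xV unfolding locally_finite_def by auto
      have yN: "y \<in> nbrs V w x" using xy unfolding nbrs_def by simp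
      have ec': "e < c" "e < 1/2" using ec unfolding c0_def by auto
      have "\<exists>z. z \<in> nbrs V w x \<and> z \<noteq> y \<and> g x - g z \<ge> c"
      proof (rule ccontr)
        assume nz: "\<not> (\<exists>z. z \<in> nbrs V w x \<and> z \<noteq> y \<and> g x - g z \<ge> c)"
        have small: "g x - g v < c" if "v \<in> nbrs V w x - {y}" for v
          using nz that by force
        have "0 = lap V w m g x" using harm xV by simp
        also have "\<dots> = qq w m x y * (g y - g x) + (\<Sum>v\<in>nbrs V w x - {y}. qq w m x v * (g v - g x))"
          unfolding lap_def using finx yN by (simp add: sum.remove)
        finally have eq: "0 = qq w m x y * (g y - g x) + (\<Sum>v\<in>nbrs V w x - {y}. qq w m x v * (g v - g x))" .
        have "(\<Sum>v\<in>nbrs V w x - {y}. qq w m x v * (g v - g x)) \<ge> (\<Sum>v\<in>nbrs V w x - {y}. qq w m x v * (- c))"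
        proof (rule sum_mono)
          fix v assume v: "v \<in> nbrs V w x - {y}"
          have "g v - g x \<ge> - c" using small[OF v] by simp
          then show "qq w m x v * (- c) \<le> qq w m x v * (g v - g x)"
            using qq_nonneg[OF graph] v by (intro mult_left_mono) auto
        qed
        moreover have "(\<Sum>v\<in>nbrs V w x - {y}. qq w m x v * (- c)) = - c * (\<Sum>v\<in>nbrs V w x - {y}. qq w m x v)"
          by (simp add: sum_distrib_left mult.commute)
        moreover have "(\<Sum>v\<in>nbrs V w x - {y}. qq w m x v) \<le> deg V w m x"
          unfolding deg_def using finx by (intro sum_mono2) (auto intro: qq_nonneg[OF graph])
        moreover have "deg V w m x \<le> D" using Ddeg xV by simp
        moreover have "c * D = Q / 2" unfolding c_def using D1 by simp
        ultimately have A: "(\<Sum>v\<in>nbrs V w x - {y}. qq w m x v * (g v - g x)) \<ge> - (Q / 2)"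
        proof -
          assume a1: "(\<Sum>v\<in>nbrs V w x - {y}. qq w m x v * (- c)) \<le> (\<Sum>v\<in>nbrs V w x - {y}. qq w m x v * (g v - g x))"
            and a2: "(\<Sum>v\<in>nbrs V w x - {y}. qq w m x v * (- c)) = - c * (\<Sum>v\<in>nbrs V w x - {y}. qq w m x v)"
            and a3: "(\<Sum>v\<in>nbrs V w x - {y}. qq w m x v) \<le> deg V w m x"
            and a4: "deg V w m x \<le> D" and a5: "c * D = Q / 2"
          have "c * (\<Sum>v\<in>nbrs V w x - {y}. qq w m x v) \<le> c * D"
            using a3 a4 cpos by (intro mult_left_mono) auto
          then show ?thesis using a1 a2 a5 by simp
        qed
        have "qq w m x y * (g y - g x) \<ge> Q * (g y - g x)"
          using Qle[OF xy] gxy ec' by (intro mult_right_mono) auto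
        moreover have "Q * (g y - g x) > Q / 2"
        proof -
          have "g y - g x > 1/2" using gxy ec' by simp
          then have "Q * (1/2) < Q * (g y - g x)" using Qpos by (intro mult_strict_left_mono) auto
          then show ?thesis by simp
        qed
        ultimately show False using eq A by linarith
      qed
      then obtain z where z: "z \<in> nbrs V w x" "z \<noteq> y" "g x - g z \<ge> c" by blast
      have zny: "z \<notin> nbrs V w y"
      proof
        assume "z \<in> nbrs V w y"
        then have "adj V w y z" unfolding nbrs_def by simp
        then have "g y - g z \<le> 1" using lipg by blast
        then show False using z(3) gxy ec' by linarith
      qed
      have xz: "adj V w x z" using z(1) unfolding nbrs_def by simp
      have zx: "z \<noteq> x" using adj_neq[OF graph xz] by simp
      define t where "t = 2 * D * e / Q"
      have t0: "t \<ge> 0" unfolding t_def using Qpos D1 e0 by simp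
      have cv: "curv V w m x y \<ge> 0" using curv_nonneg xV yV xny by blast
      have notH: "\<not> (\<forall>u\<in>nbrs V w z. psi V w g x eta u - psi V w g x eta z + t \<le> 1)"
      proof
        assume H: "\<forall>u\<in>nbrs V w z. psi V w g x eta u - psi V w g x eta z + t \<le> 1"
        have I: "t * qq w m x z \<le> eta * (deg V w m x + deg V w m y)"
          by (rule local_ineq[OF graph lf cv xy lipg harm[OF xV] harm[OF yV] z(1) z(2) zny t0 eta_def H])
        have "t * Q \<le> t * qq w m x z" using Qle[OF xz] t0 by (intro mult_left_mono) auto
        moreover have "t * Q = 2 * D * e" unfolding t_def using Qpos by simp
        moreover have "eta * (deg V w m x + deg V w m y) \<le> eta * (2 * D)"
          using Ddeg[OF xV] Ddeg[OF yV] eta0 by (intro mult_left_mono) auto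
        moreover have "eta * (2 * D) < e * (2 * D)" using etae D1 by (intro mult_strict_right_mono) auto
        moreover have "e * (2 * D) = 2 * D * e" by simp
        ultimately show False using I by linarith
      qed
      then obtain u where u: "u \<in> nbrs V w z" "psi V w g x eta u - psi V w g x eta z + t > 1"
        by (auto simp: not_le)
      have pu: "psi V w g x eta u \<le> g u" unfolding psi_def by simp
      have hz: "hfun V w x z = 1" using zx xz unfolding hfun_def by simp
      have "g z - g x \<le> 1" using lipg adj_sym[OF graph xz] by blast
      then have pz: "psi V w g x eta z \<ge> g z - eta" unfolding psi_def hz using eta0 by simp
      have Ke: "K * e = t + e" unfolding K_def t_def using Qpos by (simp add: field_simps)
      have "g u - g z > 1 - K * e" using u(2) pu pz etae Ke by linarith
      moreover have "adj V w z u" using u(1) unfolding nbrs_def by simp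
      ultimately show ?thesis using z(3) by (intro exI[of _ z] exI[of _ u]) auto
    qed
    have iter: "\<forall>e x y. adj V w x y \<and> 0 < e \<and> e * K ^ n < c0 \<and> g y - g x > 1 - e \<longrightarrow> (\<exists>x'\<in>V. g x' \<le> g x - real n * c)" for n
    proof (induction n)
      case 0
      show ?case
      proof (intro allI impI)
        fix e x y assume "adj V w x y \<and> 0 < e \<and> e * K ^ 0 < c0 \<and> g y - g x > 1 - e"
        then have "x \<in> V" unfolding adj_def by simp
        then show "\<exists>x'\<in>V. g x' \<le> g x - real 0 * c" by auto
      qed
    next
      case (Suc n)
      show ?case
      proof (intro allI impI)
        fix e x y assume a: "adj V w x y \<and> 0 < e \<and> e * K ^ Suc n < c0 \<and> g y - g x > 1 - e"
        have "1 \<le> K ^ Suc n" using K1 by (rule one_le_power)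
        then have "e \<le> e * K ^ Suc n" using a by (simp add: mult_le_cancel_left1)
        moreover have "e * K ^ Suc n < c0" using a by blast
        ultimately have "e < c0" by (rule order.strict_trans1)
        then obtain x1 y1 where s: "adj V w x1 y1" "g y1 - g x1 > 1 - K * e" "g x1 \<le> g x - c"
          using step a by blast
        have eqK: "(K * e) * K ^ n = e * K ^ Suc n" by simp
        have lt: "(K * e) * K ^ n < c0" unfolding eqK using a by blast
        have "0 < K * e" using a K1 by simp
        then have "adj V w x1 y1 \<and> 0 < K * e \<and> (K * e) * K ^ n < c0 \<and> g y1 - g x1 > 1 - K * e"
          using s lt by blast
        then obtain x' where "x' \<in> V" "g x' \<le> g x1 - real n * c" using Suc.IH by blast
        then show "\<exists>x'\<in>V. g x' \<le> g x - real (Suc n) * c" using s(3)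
          by (intro bexI[of _ x']) (auto simp: algebra_simps)
      qed
    qed
    obtain n where n: "(2 * B / L) / c < real n" using reals_Archimedean2 by blast
    have nc: "real n * c > 2 * B / L" using iffD1[OF pos_divide_less_eq[OF cpos] n] .
    define e where "e = c0 / (2 * K ^ n)"
    have Kn: "K ^ n > 0" using K1 by simp
    have e0: "e > 0" unfolding e_def using c0pos Kn by simp
    have eK: "e * K ^ n < c0" unfolding e_def using c0pos Kn by simp
    obtain a b where ab: "adj V w a b" "g a - g b > 1 - e" using gapprox[OF e0] by blast
    have ba: "adj V w b a" using adj_sym[OF graph ab(1)] .
    obtain x' where x': "x' \<in> V" "g x' \<le> g b - real n * c"
      using iter[of n] ba e0 eK ab(2) by blast
    have "b \<in> V" using ab(1) unfolding adj_def by simp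
    then have "g b \<le> B / L" using gB by fastforce
    moreover have "g x' \<ge> - (B / L)" using gB[OF x'(1)] by linarith
    ultimately have False using x'(2) nc by linarith
    then show ?thesis by blast
  qed
qed

end
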